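(* Let $M$ be a model with borders, let $f:M^s\to U(n)$ be the unique p-morphism with image $M_{\wedge,\to}$, let $h:\mathcal U(M_{\wedge,\to})\to\mathcal U(M^s)$ be $h(U)=f^{-1}(U)$, and let $r:\mathcal U(M^s)\to\mathcal U(M)$ be $r(V)=\{x\in M\mid\forall y\ge x\,(y\in M^s\Rightarrow y\in V)\}$. Let $B$ be the $(\wedge,\to)$-subalgebra of $\mathcal U(M)$ generated by $v(p_1),\dots,v(p_n)$. Then $B$ equals the image of $r\circ h$. In particular, $B$ is isomorphic, as an implicative meet-semilattice, to $\mathcal U(M_{\wedge,\to})$.
   Context: Fix $n\ge1$ and variables $p_1,\dots,p_n$; $2^n=\{0,1\}^n$ with componentwise order. A model is $(M,\le,c)$, $(M,\le)$ a poset, $c:M\to 2^n$ order-preserving, with intuitionistic Kripke semantics; $v(\varphi)$ is the set of points satisfying $\varphi$. $\mathcal U(X)$ is the Heyting algebra of up-sets of a poset $X$. A p-morphism of models is an order- and colour-preserving map $f$ such that $f(x)\le y$ implies $f(x')=y$ for some $x'\ge x$. A point $x$ is a $q$-border point if $x\not\models q$ and all $y>x$ satisfy $q$; separated if it is a $q$-border point for some variable $q$. $M^s$: separated points with restricted order and colouring (all chains have at most $n$ elements). $M$ has borders if for every variable $p$ and every $x$ with $x\not\models p$ there is a $p$-border point $y\ge x$. $U(n)$ is the $n$-universal model: the generated submodel of the canonical model of IPC on $p_1,\dots,p_n$ (prime filters of the free Heyting algebra ordered by inclusion, $c(x)_i=1$ iff $p_i\in x$) consisting of points with finite up-set. For every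 model of finite depth there is a unique p-morphism into $U(n)$. $M_{\wedge,\to}$ is the image of the unique p-morphism $M^s\to U(n)$, a generated submodel of $U(n)$. *)

theory Defs
  imports Main
begin

text \<open>A model over variables p_0..p_(n-1): carrier M, partial order le on M,
 colouring c (c x i means x satisfies p_i, only i < n is relevant).\<close>

definition is_model :: "nat \<Rightarrow> 'a set \<Rightarrow> ('a \<Rightarrow> 'a \<Rightarrow> bool) \<Rightarrow> ('a \<Rightarrow> nat \<Rightarrow> bool) \<Rightarrow> bool" where
  "is_model n M le c \<longleftrightarrow>
     (\<forall>x\<in>M. le x x) \<and>
     (\<forall>x\<in>M. \<forall>y\<in>M. le x y \<and> le y x \<longrightarrow> x = y) \<and>
     (\<forall>x\<in>M. \<forall>y\<in>M. \<forall>z\<in>M. le x y \<and> le y z \<longrightarrow> le x z) \<and>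
     (\<forall>x\<in>M. \<forall>y\<in>M. le x y \<longrightarrow> (\<forall>i<n. c x i \<longrightarrow> c y i))"

definition val :: "'a set \<Rightarrow> ('a \<Rightarrow> nat \<Rightarrow> bool) \<Rightarrow> nat \<Rightarrow> 'a set" where
  "val M c i = {x\<in>M. c x i}"

definition border_point :: "'a set \<Rightarrow> ('a \<Rightarrow> 'a \<Rightarrow> bool) \<Rightarrow> ('a \<Rightarrow> nat \<Rightarrow> bool) \<Rightarrow> nat \<Rightarrow> 'a \<Rightarrow> bool" where
  "border_point M le c i x \<longleftrightarrow> x \<in> M \<and> \<not> c x i \<and> (\<forall>y\<in>M. le x y \<and> y \<noteq> x \<longrightarrow> c y i)"

definition separated_pts :: "nat \<Rightarrow> 'a set \<Rightarrow> ('a \<Rightarrow> 'a \<Rightarrow> bool) \<Rightarrow> ('a \<Rightarrow> nat \<Rightarrow> bool) \<Rightarrow> 'a set" where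
  "separated_pts n M le c = {x\<in>M. \<exists>i<n. border_point M le c i x}"

definition has_borders :: "nat \<Rightarrow> 'a set \<Rightarrow> ('a \<Rightarrow> 'a \<Rightarrow> bool) \<Rightarrow> ('a \<Rightarrow> nat \<Rightarrow> bool) \<Rightarrow> bool" where
  "has_borders n M le c \<longleftrightarrow>
     (\<forall>i<n. \<forall>x\<in>M. \<not> c x i \<longrightarrow> (\<exists>y\<in>M. le x y \<and> border_point M le c i y))"

definition p_morphism :: "nat \<Rightarrow> 'a set \<Rightarrow> ('a \<Rightarrow> 'a \<Rightarrow> bool) \<Rightarrow> ('a \<Rightarrow> nat \<Rightarrow> bool)
    \<Rightarrow> 'b set \<Rightarrow> ('b \<Rightarrow> 'b \<Rightarrow> bool) \<Rightarrow> ('b \<Rightarrow> nat \<Rightarrow> bool) \<Rightarrow> ('a \<Rightarrow> 'b) \<Rightarrow> bool" where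
  "p_morphism n M le c N le' c' f \<longleftrightarrow>
     (\<forall>x\<in>M. f x \<in> N) \<and>
     (\<forall>x\<in>M. \<forall>y\<in>M. le x y \<longrightarrow> le' (f x) (f y)) \<and>
     (\<forall>x\<in>M. \<forall>i<n. c' (f x) i = c x i) \<and>
     (\<forall>x\<in>M. \<forall>y\<in>N. le' (f x) y \<longrightarrow> (\<exists>x'\<in>M. le x x' \<and> f x' = y))"

definition upsets :: "'a set \<Rightarrow> ('a \<Rightarrow> 'a \<Rightarrow> bool) \<Rightarrow> 'a set set" where
  "upsets M le = {U. U \<subseteq> M \<and> (\<forall>x\<in>U. \<forall>y\<in>M. le x y \<longrightarrow> y \<in> U)}"

definition himp :: "'a set \<Rightarrow> ('a \<Rightarrow> 'a \<Rightarrow> bool) \<Rightarrow> 'a set \<Rightarrow> 'a set \<Rightarrow> 'a set" where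
  "himp M le U V = {x\<in>M. \<forall>y\<in>M. le x y \<longrightarrow> y \<in> U \<longrightarrow> y \<in> V}"

inductive_set imp_meet_gen :: "nat \<Rightarrow> 'a set \<Rightarrow> ('a \<Rightarrow> 'a \<Rightarrow> bool) \<Rightarrow> ('a \<Rightarrow> nat \<Rightarrow> bool) \<Rightarrow> 'a set set"
  for n M le c where
  gen_var: "i < n \<Longrightarrow> val M c i \<in> imp_meet_gen n M le c"
| gen_meet: "U \<in> imp_meet_gen n M le c \<Longrightarrow> V \<in> imp_meet_gen n M le c \<Longrightarrow> U \<inter> V \<in> imp_meet_gen n M le c"
| gen_imp: "U \<in> imp_meet_gen n M le c \<Longrightarrow> V \<in> imp_meet_gen n M le c \<Longrightarrow> himp M le U V \<in> imp_meet_gen n M le c"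

datatype form = Var nat | Bot | Conj form form | Disj form form | Imp form form

fun vars :: "form \<Rightarrow> nat set" where
  "vars (Var i) = {i}"
| "vars Bot = {}"
| "vars (Conj a b) = vars a \<union> vars b"
| "vars (Disj a b) = vars a \<union> vars b"
| "vars (Imp a b) = vars a \<union> vars b"

inductive ipc :: "form \<Rightarrow> bool" where
  ax_K: "ipc (Imp a (Imp b a))"
| ax_S: "ipc (Imp (Imp a (Imp b c)) (Imp (Imp a b) (Imp a c)))"
| ax_C1: "ipc (Imp (Conj a b) a)"
| ax_C2: "ipc (Imp (Conj a b) b)"
| ax_C3: "ipc (Imp a (Imp b (Conj a b)))"
| ax_D1: "ipc (Imp a (Disj a b))"
| ax_D2: "ipc (Imp b (Disj a b))"
| ax_D3: "ipc (Imp (Imp a c) (Imp (Imp b c) (Imp (Disj a b) c)))"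
| ax_Bot: "ipc (Imp Bot a)"
| mp: "ipc (Imp a b) \<Longrightarrow> ipc a \<Longrightarrow> ipc b"

definition fmls :: "nat \<Rightarrow> form set" where
  "fmls n = {a. vars a \<subseteq> {..<n}}"

text \<open>Prime theories over p_0..p_(n-1); these correspond exactly to the prime filters
 of the free Heyting algebra on n generators (the Lindenbaum algebra of IPC).\<close>
definition prime_theory :: "nat \<Rightarrow> form set \<Rightarrow> bool" where
  "prime_theory n T \<longleftrightarrow>
     T \<subseteq> fmls n \<and>
     (\<forall>a\<in>fmls n. ipc a \<longrightarrow> a \<in> T) \<and>
     (\<forall>a b. a \<in> T \<longrightarrow> Imp a b \<in> T \<longrightarrow> b \<in> T) \<and>
     Bot \<notin> T \<and>
     (\<forall>a b. Disj a b \<in> T \<longrightarrow> a \<in> T \<or> b \<in> T)"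

text \<open>Points of U(n): points of the canonical model with finite up-set; order is inclusion.\<close>
definition univ_pts :: "nat \<Rightarrow> form set set" where
  "univ_pts n = {T. prime_theory n T \<and> finite {S. prime_theory n S \<and> T \<subseteq> S}}"

definition univ_col :: "form set \<Rightarrow> nat \<Rightarrow> bool" where
  "univ_col T i \<longleftrightarrow> Var i \<in> T"

end

theory Submission
  imports Defs
begin


fun sub :: "nat \<Rightarrow> form \<Rightarrow> form" where
  "sub n (Var i) = (if i < n then Var i else Bot)"
| "sub n Bot = Bot"
| "sub n (Conj a b) = Conj (sub n a) (sub n b)"
| "sub n (Disj a b) = Disj (sub n a) (sub n b)"
| "sub n (Imp a b) = Imp (sub n a) (sub n b)"

lemma ipc_sub: "ipc a \<Longrightarrow> ipc (sub n a)"
proof (induction rule: ipc.induct)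
  case (mp a b)
  then show ?case using ipc.mp[of "sub n a" "sub n b"] by simp
qed (simp_all add: ax_K ax_S ax_C1 ax_C2 ax_C3 ax_D1 ax_D2 ax_D3 ax_Bot)

lemma sub_fmls: "sub n a \<in> fmls n"
  by (induction a) (auto simp: fmls_def)

lemma sub_id: "a \<in> fmls n \<Longrightarrow> sub n a = a"
  by (induction a) (auto simp: fmls_def)

lemma fmls_simps[simp]:
  "Var i \<in> fmls n \<longleftrightarrow> i < n"
  "Bot \<in> fmls n"
  "Conj a b \<in> fmls n \<longleftrightarrow> a \<in> fmls n \<and> b \<in> fmls n"
  "Disj a b \<in> fmls n \<longleftrightarrow> a \<in> fmls n \<and> b \<in> fmls n"
  "Imp a b \<in> fmls n \<longleftrightarrow> a \<in> fmls n \<and> b \<in> fmls n"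
  by (auto simp: fmls_def)

lemma pt_parts: assumes "prime_theory n T"
  shows pt_sub: "T \<subseteq> fmls n" and pt_thm: "\<And>a. a \<in> fmls n \<Longrightarrow> ipc a \<Longrightarrow> a \<in> T"
    and pt_mp: "\<And>a b. a \<in> T \<Longrightarrow> Imp a b \<in> T \<Longrightarrow> b \<in> T" and pt_bot: "Bot \<notin> T"
    and pt_dp: "\<And>a b. Disj a b \<in> T \<Longrightarrow> a \<in> T \<or> b \<in> T"
  using assms unfolding prime_theory_def by blast+

inductive der :: "form set \<Rightarrow> form \<Rightarrow> bool" for G where
  der_ax: "ipc a \<Longrightarrow> der G a"
| der_as: "a \<in> G \<Longrightarrow> der G a"
| der_mp: "der G (Imp a b) \<Longrightarrow> der G a \<Longrightarrow> der G b"

lemma der_mono: "der G a \<Longrightarrow> G \<subseteq> G' \<Longrightarrow> der G' a"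
proof (induction rule: der.induct)
  case (der_mp a b)
  then show ?case using der.der_mp by blast
qed (auto intro: der.der_ax der.der_as)

lemma ipc_I: "ipc (Imp a a)"
  by (rule mp[OF mp[OF ax_S ax_K] ax_K])

lemma deduction: "der (insert a G) b \<Longrightarrow> der G (Imp a b)"
proof (induction rule: der.induct)
  case (der_ax b)
  then show ?case using der.der_mp[OF der.der_ax[OF ax_K] der.der_ax] by blast
next
  case (der_as b)
  show ?case
  proof (cases "b = a")
    case True
    then show ?thesis using der.der_ax[OF ipc_I] by simp
  next
    case False
    then have "b \<in> G" using der_as by simp
    then show ?thesis using der.der_mp[OF der.der_ax[OF ax_K] der.der_as] by blast
  qed
next
  case (der_mp b c)
  show ?case using der.der_mp[OF der.der_mp[OF der.der_ax[OF ax_S] der_mp.IH(1)] der_mp.IH(2)] .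
qed

lemma der_compact: "der G a \<Longrightarrow> \<exists>G0\<subseteq>G. finite G0 \<and> der G0 a"
proof (induction rule: der.induct)
  case (der_ax a)
  then show ?case by (intro exI[of _ "{}"]) (auto intro: der.der_ax)
next
  case (der_as a)
  then show ?case by (intro exI[of _ "{a}"]) (auto intro: der.der_as)
next
  case (der_mp a b)
  then obtain G1 G2 where "G1 \<subseteq> G" "finite G1" "der G1 (Imp a b)" "G2 \<subseteq> G" "finite G2" "der G2 a" by blast
  note G = this
  then show ?case
  proof (intro exI conjI)
    show "G1 \<union> G2 \<subseteq> G" "finite (G1 \<union> G2)" using G by auto
    show "der (G1 \<union> G2) b" using der.der_mp[OF der_mono[OF G(3)] der_mono[OF G(6)]] by blast
  qed
qed

lemma prime_closed: assumes T: "prime_theory n T" and d: "der T a" shows "sub n a \<in> T"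
  using d
proof (induction rule: der.induct)
  case (der_ax a)
  show ?case by (rule pt_thm[OF T sub_fmls ipc_sub[OF der_ax]])
next
  case (der_as a)
  then have "a \<in> fmls n" using pt_sub[OF T] by blast
  then show ?case using der_as sub_id by simp
next
  case (der_mp a b)
  then have "Imp (sub n a) (sub n b) \<in> T" by simp
  then show ?case by (rule pt_mp[OF T der_mp.IH(2)])
qed

lemma lindenbaum:
  assumes T: "prime_theory n T" and a: "a \<in> fmls n" and b: "b \<in> fmls n" and nab: "Imp a b \<notin> T"
  shows "\<exists>S. prime_theory n S \<and> T \<subseteq> S \<and> a \<in> S \<and> b \<notin> S"
proof -
  define A where "A = {S. insert a T \<subseteq> S \<and> S \<subseteq> fmls n \<and> \<not> der S b}"
  have TA: "insert a T \<in> A"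
  proof -
    have "\<not> der (insert a T) b"
    proof
      assume "der (insert a T) b"
      then have "der T (Imp a b)" by (rule deduction)
      then have "sub n (Imp a b) \<in> T" using prime_closed T by blast
      then show False using nab sub_id[of "Imp a b" n] a b by simp
    qed
    then show ?thesis using pt_sub[OF T] a unfolding A_def by auto
  qed
  have "\<exists>S\<in>A. \<forall>X\<in>A. S \<subseteq> X \<longrightarrow> X = S"
  proof (rule subset_Zorn_nonempty)
    show "A \<noteq> {}" using TA by blast
  next
    fix C assume C: "C \<noteq> {}" "subset.chain A C"
    then have CA: "C \<subseteq> A" by (simp add: subset_chain_def)
    have "\<not> der (\<Union>C) b"
    proof
      assume "der (\<Union>C) b"
      then obtain G0 where G0: "G0 \<subseteq> \<Union>C" "finite G0" "der G0 b" using der_compact by blast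
      then obtain B where "B \<in> C" "G0 \<subseteq> B" using finite_subset_Union_chain[OF G0(2) G0(1) C(1) C(2)] by blast
      then have "der B b" using G0 der_mono by blast
      then show False using \<open>B \<in> C\<close> CA unfolding A_def by auto
    qed
    then show "\<Union>C \<in> A" using C CA unfolding A_def by auto
  qed
  then obtain S where SA: "S \<in> A" and Smax: "\<And>X. X \<in> A \<Longrightarrow> S \<subseteq> X \<Longrightarrow> X = S" by blast
  have S: "insert a T \<subseteq> S" "S \<subseteq> fmls n" "\<not> der S b" using SA unfolding A_def by auto
  have cl: "x \<in> S" if "der S x" "x \<in> fmls n" for x
  proof -
    have "\<not> der (insert x S) b"
    proof
      assume "der (insert x S) b"
      then have "der S (Imp x b)" by (rule deduction)
      then show False using that S(3) der_mp by blast
    qed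
    then have "insert x S \<in> A" using S that unfolding A_def by auto
    then show ?thesis using Smax by blast
  qed
  have "prime_theory n S"
    unfolding prime_theory_def
  proof (intro conjI allI impI ballI)
    show "S \<subseteq> fmls n" by fact
  next
    fix x assume "x \<in> fmls n" "ipc x" then show "x \<in> S" using cl der_ax by blast
  next
    fix x y assume "x \<in> S" "Imp x y \<in> S"
    moreover then have "y \<in> fmls n" using S(2) by auto
    ultimately show "y \<in> S" using cl[OF der_mp[OF der_as[of "Imp x y"] der_as[of x]]] by blast
  next
    show "Bot \<notin> S" using S(3) der_mp[OF der_ax[OF ax_Bot] der_as[of Bot]] by blast
  next
    fix x y assume d: "Disj x y \<in> S"
    then have xy: "x \<in> fmls n" "y \<in> fmls n" using S(2) by auto
    show "x \<in> S \<or> y \<in> S"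
    proof (rule ccontr)
      assume "\<not> (x \<in> S \<or> y \<in> S)"
      then have nx: "x \<notin> S" and ny: "y \<notin> S" by auto
      have "insert x S \<notin> A" using Smax nx by blast
      then have "der (insert x S) b" using S xy unfolding A_def by auto
      then have 1: "der S (Imp x b)" by (rule deduction)
      have "insert y S \<notin> A" using Smax ny by blast
      then have "der (insert y S) b" using S xy unfolding A_def by auto
      then have 2: "der S (Imp y b)" by (rule deduction)
      have "der S b"
        by (rule der_mp[OF der_mp[OF der_mp[OF der_ax[OF ax_D3] 1] 2] der_as[OF d]])
      then show False using S(3) by simp
    qed
  qed
  moreover have "b \<notin> S" using S(3) der_as by blast
  ultimately show ?thesis using S by blast
qed

lemma pt_conj: assumes T: "prime_theory n T" and a: "a \<in> fmls n" and b: "b \<in> fmls n"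
  shows "Conj a b \<in> T \<longleftrightarrow> a \<in> T \<and> b \<in> T"
proof -
  note m = pt_mp[OF T]
  have t: "\<And>x. ipc x \<Longrightarrow> x \<in> fmls n \<Longrightarrow> x \<in> T" using pt_thm[OF T] by blast
  have 1: "Imp (Conj a b) a \<in> T" "Imp (Conj a b) b \<in> T" "Imp a (Imp b (Conj a b)) \<in> T"
    using t[OF ax_C1[of a b]] t[OF ax_C2[of a b]] t[OF ax_C3[of a b]] a b by auto
  show ?thesis using m[OF _ 1(1)] m[OF _ 1(2)] m[OF _ m[OF _ 1(3)]] by blast
qed

lemma pt_disj: assumes T: "prime_theory n T" and a: "a \<in> fmls n" and b: "b \<in> fmls n"
  shows "Disj a b \<in> T \<longleftrightarrow> a \<in> T \<or> b \<in> T"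
proof -
  note m = pt_mp[OF T] and d = pt_dp[OF T]
  have t: "\<And>x. ipc x \<Longrightarrow> x \<in> fmls n \<Longrightarrow> x \<in> T" using pt_thm[OF T] by blast
  have 1: "Imp a (Disj a b) \<in> T" "Imp b (Disj a b) \<in> T"
    using t[OF ax_D1[of a b]] t[OF ax_D2[where a=a and b=b]] a b by auto
  show ?thesis using m[OF _ 1(1)] m[OF _ 1(2)] d by blast
qed

lemma pt_imp_dir:
  assumes w: "prime_theory n w" and w': "prime_theory n w'"
    and succ: "{S. prime_theory n S \<and> w \<subset> S} = {S. prime_theory n S \<and> w' \<subset> S}"
    and a: "a \<in> fmls n" and b: "b \<in> fmls n"
    and IHa: "a \<in> w \<longleftrightarrow> a \<in> w'" and IHb: "b \<in> w \<longleftrightarrow> b \<in> w'"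
    and i: "Imp a b \<in> w"
  shows "Imp a b \<in> w'"
proof (rule ccontr)
  assume "Imp a b \<notin> w'"
  then obtain S where S: "prime_theory n S" "w' \<subseteq> S" "a \<in> S" "b \<notin> S"
    using lindenbaum[OF w' a b] by blast
  show False
  proof (cases "S = w'")
    case True
    then show ?thesis using S IHa IHb i pt_mp[OF w] by blast
  next
    case False
    then have "S \<in> {S. prime_theory n S \<and> w \<subset> S}" using succ S by auto
    then have "w \<subseteq> S" by auto
    then show ?thesis using S i pt_mp[OF S(1)] by blast
  qed
qed

lemma determinism:
  assumes w: "prime_theory n w" and w': "prime_theory n w'"
    and col: "\<forall>i<n. Var i \<in> w \<longleftrightarrow> Var i \<in> w'"
    and succ: "{S. prime_theory n S \<and> w \<subset> S} = {S. prime_theory n S \<and> w' \<subset> S}"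
  shows "w = w'"
proof -
  have "a \<in> fmls n \<longrightarrow> (a \<in> w \<longleftrightarrow> a \<in> w')" for a
  proof (induction a)
    case (Var x)
    then show ?case using col by simp
  next
    case Bot
    then show ?case using pt_bot[OF w] pt_bot[OF w'] by auto
  next
    case (Conj a1 a2)
    show ?case
    proof
      assume "Conj a1 a2 \<in> fmls n"
      then have f: "a1 \<in> fmls n" "a2 \<in> fmls n" by auto
      show "Conj a1 a2 \<in> w \<longleftrightarrow> Conj a1 a2 \<in> w'"
        unfolding pt_conj[OF w f] pt_conj[OF w' f] using Conj.IH f by blast
    qed
  next
    case (Disj a1 a2)
    show ?case
    proof
      assume "Disj a1 a2 \<in> fmls n"
      then have f: "a1 \<in> fmls n" "a2 \<in> fmls n" by auto
      show "Disj a1 a2 \<in> w \<longleftrightarrow> Disj a1 a2 \<in> w'"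
        unfolding pt_disj[OF w f] pt_disj[OF w' f] using Disj.IH f by blast
    qed
  next
    case (Imp a1 a2)
    show ?case
    proof
      assume "Imp a1 a2 \<in> fmls n"
      then have f: "a1 \<in> fmls n" "a2 \<in> fmls n" by auto
      have i1: "a1 \<in> w \<longleftrightarrow> a1 \<in> w'" "a2 \<in> w \<longleftrightarrow> a2 \<in> w'" using Imp.IH f by auto
      show "Imp a1 a2 \<in> w \<longleftrightarrow> Imp a1 a2 \<in> w'"
        using pt_imp_dir[OF w w' succ f i1] pt_imp_dir[OF w' w succ[symmetric] f i1[symmetric]] by blast
    qed
  qed
  then show ?thesis using pt_sub[OF w] pt_sub[OF w'] by blast
qed




locale ctx =
  fixes n :: nat and M :: "'a set" and le :: "'a \<Rightarrow> 'a \<Rightarrow> bool" and c :: "'a \<Rightarrow> nat \<Rightarrow> bool"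
    and f :: "'a \<Rightarrow> form set"
  assumes n1: "n \<ge> 1" and model: "is_model n M le c" and hb: "has_borders n M le c"
    and pm: "p_morphism n (separated_pts n M le c) le c (univ_pts n) (\<subseteq>) univ_col f"
begin

abbreviation "Ms \<equiv> separated_pts n M le c"
abbreviation "N \<equiv> f ` Ms"

lemma Ms_M: "Ms \<subseteq> M" by (auto simp: separated_pts_def)

lemma M_refl: "x \<in> M \<Longrightarrow> le x x"
  using model unfolding is_model_def by blast
lemma M_trans: "x \<in> M \<Longrightarrow> y \<in> M \<Longrightarrow> z \<in> M \<Longrightarrow> le x y \<Longrightarrow> le y z \<Longrightarrow> le x z"
  using model unfolding is_model_def by blast
lemma c_mono: "x \<in> M \<Longrightarrow> y \<in> M \<Longrightarrow> le x y \<Longrightarrow> i < n \<Longrightarrow> c x i \<Longrightarrow> c y i"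
  using model unfolding is_model_def by blast

lemma f_in: "x \<in> Ms \<Longrightarrow> f x \<in> univ_pts n"
  using pm unfolding p_morphism_def by blast
lemma f_mono: "x \<in> Ms \<Longrightarrow> y \<in> Ms \<Longrightarrow> le x y \<Longrightarrow> f x \<subseteq> f y"
  using pm unfolding p_morphism_def by blast
lemma f_col: "x \<in> Ms \<Longrightarrow> i < n \<Longrightarrow> Var i \<in> f x \<longleftrightarrow> c x i"
  using pm unfolding p_morphism_def univ_col_def by blast
lemma f_back: "x \<in> Ms \<Longrightarrow> S \<in> univ_pts n \<Longrightarrow> f x \<subseteq> S \<Longrightarrow> \<exists>x'\<in>Ms. le x x' \<and> f x' = S"
  using pm unfolding p_morphism_def by blast

definition Succ :: "form set \<Rightarrow> form set set" where
  "Succ w = {S. prime_theory n S \<and> w \<subset> S}"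
definition col :: "form set \<Rightarrow> nat set" where
  "col w = {i. i < n \<and> Var i \<in> w}"
definition bord :: "form set \<Rightarrow> nat \<Rightarrow> bool" where
  "bord w q \<longleftrightarrow> q < n \<and> Var q \<notin> w \<and> (\<forall>S\<in>Succ w. Var q \<in> S)"

lemma N_univ: "w \<in> N \<Longrightarrow> w \<in> univ_pts n"
  using f_in by blast

lemma N_pt: "w \<in> N \<Longrightarrow> prime_theory n w"
  using N_univ unfolding univ_pts_def by blast

lemma N_up: assumes "w \<in> N" "prime_theory n S" "w \<subseteq> S" shows "S \<in> N"
proof -
  obtain x where x: "x \<in> Ms" "w = f x" using assms(1) by blast
  have "finite {S'. prime_theory n S' \<and> w \<subseteq> S'}" using N_univ[OF assms(1)] unfolding univ_pts_def by blast
  then have "finite {S'. prime_theory n S' \<and> S \<subseteq> S'}"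
    by (rule finite_subset[rotated]) (use assms(3) in auto)
  then have "S \<in> univ_pts n" using assms(2) unfolding univ_pts_def by blast
  then obtain x' where "x' \<in> Ms" "f x' = S" using f_back[OF x(1)] x(2) assms(3) by blast
  then show ?thesis by blast
qed

lemma Succ_N: "w \<in> N \<Longrightarrow> Succ w \<subseteq> N"
  using N_up unfolding Succ_def by blast

lemma Succ_fin: "w \<in> N \<Longrightarrow> finite (Succ w)"
proof -
  assume "w \<in> N"
  then have "finite {S'. prime_theory n S' \<and> w \<subseteq> S'}" using N_univ unfolding univ_pts_def by blast
  then show ?thesis by (rule finite_subset[rotated]) (auto simp: Succ_def)
qed

lemma Succ_iff: "S \<in> N \<Longrightarrow> S \<in> Succ w \<longleftrightarrow> w \<subset> S"
  using N_pt unfolding Succ_def by blast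

lemma N_bord: assumes "w \<in> N" shows "\<exists>q. bord w q"
proof -
  obtain x where x: "x \<in> Ms" "w = f x" using assms by blast
  then obtain i where i: "i < n" "border_point M le c i x" unfolding separated_pts_def by blast
  have "Var i \<notin> w" using i x f_col unfolding border_point_def by blast
  moreover have "Var i \<in> S" if "S \<in> Succ w" for S
  proof -
    have S: "S \<in> N" "w \<subset> S" using that Succ_N[OF assms] Succ_iff by auto
    then obtain x' where x': "x' \<in> Ms" "le x x'" "f x' = S" using f_back[OF x(1)] N_univ x(2) by blast
    then have "x' \<noteq> x" using S x by auto
    then have "c x' i" using i x' Ms_M unfolding border_point_def by blast
    then show ?thesis using f_col x' i by blast
  qed
  ultimately show ?thesis using i unfolding bord_def by blast
qed

lemma col_sub: "col w \<subseteq> {..<n}" by (auto simp: col_def)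
lemma col_fin: "finite (col w)" using col_sub finite_subset by blast
lemma col_card: "card (col w) \<le> n" using card_mono[OF _ col_sub] by simp

lemma col_less: assumes "w \<in> N" "S \<in> Succ w" shows "col w \<subset> col S"
proof -
  obtain q where q: "bord w q" using N_bord assms(1) by blast
  have "w \<subseteq> S" using assms(2) unfolding Succ_def by blast
  then have "col w \<subseteq> col S" unfolding col_def by blast
  moreover have "q \<in> col S" "q \<notin> col w" using q assms(2) unfolding bord_def col_def by auto
  ultimately show ?thesis by blast
qed

lemma det: assumes "w \<in> N" "w' \<in> N" "col w = col w'" "Succ w = Succ w'" shows "w = w'"
proof (rule determinism[OF N_pt[OF assms(1)] N_pt[OF assms(2)]])
  show "\<forall>i<n. (Var i \<in> w) = (Var i \<in> w')" using assms(3) unfolding col_def by blast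
  show "{S. prime_theory n S \<and> w \<subset> S} = {S. prime_theory n S \<and> w' \<subset> S}"
    using assms(4) unfolding Succ_def by blast
qed

lemma fin_step: assumes "finite Y" "\<forall>w\<in>X. w \<in> N \<and> Succ w \<subseteq> Y" shows "finite X"
proof (rule inj_on_finite[where f="\<lambda>w. (col w, Succ w)" and B="Pow {..<n} \<times> Pow Y"])
  show "inj_on (\<lambda>w. (col w, Succ w)) X"
  proof (rule inj_onI)
    fix x y assume "x \<in> X" "y \<in> X" "(col x, Succ x) = (col y, Succ y)"
    then show "x = y" using det[of x y] assms(2) by auto
  qed
  show "(\<lambda>w. (col w, Succ w)) ` X \<subseteq> Pow {..<n} \<times> Pow Y" using col_sub assms(2) by auto
  show "finite (Pow {..<n} \<times> Pow Y)" using assms(1) by simp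
qed

lemma fin_aux: "finite {w\<in>N. n - k \<le> card (col w)}"
proof (induction k)
  case 0
  show ?case
  proof (rule fin_step[where Y="{}"])
    show "\<forall>w\<in>{w \<in> N. n - 0 \<le> card (col w)}. w \<in> N \<and> Succ w \<subseteq> {}"
    proof (intro ballI conjI)
      fix w assume w: "w \<in> {w \<in> N. n - 0 \<le> card (col w)}"
      then have wN: "w \<in> N" and wc: "n \<le> card (col w)" by auto
      then show "w \<in> N" by blast
      show "Succ w \<subseteq> {}"
      proof
        fix S assume S: "S \<in> Succ w"
        have "card (col w) < card (col S)" by (rule psubset_card_mono[OF col_fin col_less[OF wN S]])
        moreover have "card (col S) \<le> n" by (rule col_card)
        ultimately show "S \<in> {}" using wc by linarith
      qed
    qed
  qed simp
next
  case (Suc k)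
  show ?case
  proof (rule fin_step[OF Suc.IH])
    show "\<forall>w\<in>{w \<in> N. n - Suc k \<le> card (col w)}. w \<in> N \<and> Succ w \<subseteq> {w \<in> N. n - k \<le> card (col w)}"
    proof (intro ballI conjI)
      fix w assume w: "w \<in> {w \<in> N. n - Suc k \<le> card (col w)}"
      then have wN: "w \<in> N" and wc: "n - Suc k \<le> card (col w)" by auto
      then show "w \<in> N" by blast
      show "Succ w \<subseteq> {w \<in> N. n - k \<le> card (col w)}"
      proof
        fix S assume S: "S \<in> Succ w"
        have "card (col w) < card (col S)" by (rule psubset_card_mono[OF col_fin col_less[OF wN S]])
        then have "n - k \<le> card (col S)" using wc by linarith
        moreover have "S \<in> N" using Succ_N[OF wN] S by blast
        ultimately show "S \<in> {w \<in> N. n - k \<le> card (col w)}" by blast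
      qed
    qed
  qed
qed

lemma N_fin: "finite N"
  using fin_aux[of n] by simp

end



context ctx begin

abbreviation "G \<equiv> imp_meet_gen n N (\<subseteq>) univ_col"
abbreviation P :: "nat \<Rightarrow> form set set" where "P i \<equiv> val N univ_col i"
abbreviation IMP :: "form set set \<Rightarrow> form set set \<Rightarrow> form set set" where "IMP X Y \<equiv> himp N (\<subseteq>) X Y"

lemma P_iff: "x \<in> P i \<longleftrightarrow> x \<in> N \<and> Var i \<in> x"
  by (simp add: val_def univ_col_def)

lemma IMP_iff: "x \<in> IMP X Y \<longleftrightarrow> x \<in> N \<and> (\<forall>y\<in>N. x \<subseteq> y \<longrightarrow> y \<in> X \<longrightarrow> y \<in> Y)"
  by (simp add: himp_def)

lemma G_sub: "X \<in> G \<Longrightarrow> X \<subseteq> N"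
  by (induction rule: imp_meet_gen.induct) (auto simp: val_def himp_def)

lemma G_N: "N \<in> G"
proof -
  have "IMP (P 0) (P 0) = N" by (auto simp: himp_def)
  moreover have "IMP (P 0) (P 0) \<in> G" using n1 by (intro imp_meet_gen.gen_imp imp_meet_gen.gen_var) auto
  ultimately show ?thesis by simp
qed

lemma G_Inter: "finite F \<Longrightarrow> F \<subseteq> G \<Longrightarrow> N \<inter> \<Inter>F \<in> G"
proof (induction rule: finite_induct)
  case empty
  then show ?case using G_N by simp
next
  case (insert X F)
  then have "X \<in> G" "N \<inter> \<Inter>F \<in> G" by auto
  moreover have "N \<inter> \<Inter>(insert X F) = X \<inter> (N \<inter> \<Inter>F)" using G_sub[OF \<open>X \<in> G\<close>] by auto
  ultimately show ?case using imp_meet_gen.gen_meet by metis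
qed

definition A :: "form set \<Rightarrow> form set set" where "A T = N - {x\<in>N. x \<subseteq> T}"

lemma A_iff: "x \<in> A T \<longleftrightarrow> x \<in> N \<and> \<not> x \<subseteq> T" by (auto simp: A_def)

definition Phi :: "nat set \<Rightarrow> nat \<Rightarrow> form set set \<Rightarrow> form set set \<Rightarrow> form set set" where
  "Phi C s S F = N \<inter> \<Inter>((\<lambda>i. P i) ` C \<union> (\<lambda>r. IMP (P r) (P s)) ` ({..<n} - C)
      \<union> (\<lambda>T. IMP (A T) (P s)) ` S \<union> (\<lambda>T. IMP (P s) (A T)) ` (F - S))"

lemma Phi_mem: "v \<in> Phi C s S F \<longleftrightarrow> v \<in> N \<and> (\<forall>i\<in>C. v \<in> P i) \<and> (\<forall>r\<in>{..<n}-C. v \<in> IMP (P r) (P s))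
   \<and> (\<forall>T\<in>S. v \<in> IMP (A T) (P s)) \<and> (\<forall>T\<in>F-S. v \<in> IMP (P s) (A T))"
  unfolding Phi_def Inter_Un_distrib by simp

lemma Phi_G: assumes "C \<subseteq> {..<n}" "s < n" "finite F" "S \<subseteq> F" "\<forall>T\<in>F. A T \<in> G"
  shows "Phi C s S F \<in> G"
  unfolding Phi_def
proof (rule G_Inter)
  have "finite C" using assms(1) finite_subset by blast
  moreover have "finite S" using assms(3,4) finite_subset by blast
  ultimately show "finite ((\<lambda>i. P i) ` C \<union> (\<lambda>r. IMP (P r) (P s)) ` ({..<n} - C)
      \<union> (\<lambda>T. IMP (A T) (P s)) ` S \<union> (\<lambda>T. IMP (P s) (A T)) ` (F - S))" using assms(3) by simp
  show "(\<lambda>i. P i) ` C \<union> (\<lambda>r. IMP (P r) (P s)) ` ({..<n} - C)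
      \<union> (\<lambda>T. IMP (A T) (P s)) ` S \<union> (\<lambda>T. IMP (P s) (A T)) ` (F - S) \<subseteq> G"
    using assms by (auto intro: imp_meet_gen.gen_var imp_meet_gen.gen_imp)
qed

lemma L1:
  assumes v: "v \<in> Phi C s S F" and vs: "Var s \<notin> v" and C: "C \<subseteq> {..<n}" and s: "s < n"
    and ST: "\<forall>T\<in>S. Var s \<in> T \<and> T \<in> N"
  shows "col v = C \<and> bord v s \<and> S \<subseteq> Succ v"
proof -
  have vN: "v \<in> N" and vP: "\<And>i. i \<in> C \<Longrightarrow> v \<in> P i"
    and vR: "\<And>r. r \<in> {..<n}-C \<Longrightarrow> v \<in> IMP (P r) (P s)"
    and vA: "\<And>T. T \<in> S \<Longrightarrow> v \<in> IMP (A T) (P s)"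
    using v unfolding Phi_mem by blast+
  have key: "Var s \<in> y" if y: "y \<in> N" "v \<subseteq> y" "i < n" "Var i \<in> y" "i \<notin> C" for y i
  proof -
    have "v \<in> IMP (P i) (P s)" using vR that by blast
    then have "\<forall>y\<in>N. v \<subseteq> y \<longrightarrow> y \<in> P i \<longrightarrow> y \<in> P s" unfolding IMP_iff by blast
    moreover have "y \<in> P i" using y unfolding P_iff by blast
    ultimately have "y \<in> P s" using y by blast
    then show ?thesis unfolding P_iff by blast
  qed
  have c1: "col v = C"
  proof
    show "C \<subseteq> col v"
    proof
      fix i assume "i \<in> C"
      then have "v \<in> P i" "i < n" using vP C by auto
      then show "i \<in> col v" unfolding P_iff col_def by blast
    qed
    show "col v \<subseteq> C"
    proof
      fix i assume i: "i \<in> col v"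
      then have i': "i < n" "Var i \<in> v" unfolding col_def by auto
      show "i \<in> C"
      proof (rule ccontr)
        assume "i \<notin> C"
        then have "Var s \<in> v" using key[OF vN _ i'] by blast
        then show False using vs by blast
      qed
    qed
  qed
  have b: "bord v s" unfolding bord_def
  proof (intro conjI ballI)
    show "s < n" "Var s \<notin> v" by fact+
    fix S' assume S': "S' \<in> Succ v"
    have S'N: "S' \<in> N" using Succ_N[OF vN] S' by blast
    have vS': "v \<subseteq> S'" using S' unfolding Succ_def by blast
    show "Var s \<in> S'"
    proof (rule ccontr)
      assume ns: "Var s \<notin> S'"
      have "col S' \<subseteq> C"
      proof
        fix i assume i: "i \<in> col S'"
        then have i': "i < n" "Var i \<in> S'" unfolding col_def by auto
        show "i \<in> C"
        proof (rule ccontr)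
          assume "i \<notin> C"
          then show False using key[OF S'N vS' i'] ns by blast
        qed
      qed
      moreover have "col v \<subset> col S'" by (rule col_less[OF vN S'])
      ultimately show False using c1 by blast
    qed
  qed
  have "S \<subseteq> Succ v"
  proof
    fix T assume T: "T \<in> S"
    have vT: "v \<subseteq> T"
    proof (rule ccontr)
      assume "\<not> v \<subseteq> T"
      then have "v \<in> A T" using vN unfolding A_iff by blast
      moreover have "\<forall>y\<in>N. v \<subseteq> y \<longrightarrow> y \<in> A T \<longrightarrow> y \<in> P s" using vA[OF T] unfolding IMP_iff by blast
      ultimately have "v \<in> P s" using vN by blast
      then show False using vs unfolding P_iff by blast
    qed
    have "v \<noteq> T" using T ST vs by blast
    then have "v \<subset> T" using vT by blast
    moreover have "T \<in> N" using T ST by blast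
    ultimately show "T \<in> Succ v" using Succ_iff by blast
  qed
  then show ?thesis using c1 b by blast
qed

lemma L2:
  assumes v: "v \<in> Phi C s S F" and b: "bord v s" and sv: "Succ v \<subseteq> F"
  shows "Succ v \<subseteq> S"
proof
  fix T assume T: "T \<in> Succ v"
  show "T \<in> S"
  proof (rule ccontr)
    assume "T \<notin> S"
    then have "T \<in> F - S" using T sv by blast
    then have i: "v \<in> IMP (P s) (A T)" using v unfolding Phi_mem by blast
    have vN: "v \<in> N" using v unfolding Phi_mem by blast
    have "T \<in> N" using Succ_N[OF vN] T by blast
    moreover have "v \<subseteq> T" using T unfolding Succ_def by blast
    moreover have "Var s \<in> T" using b T unfolding bord_def by blast
    ultimately have "T \<in> A T" using i unfolding IMP_iff P_iff by blast
    then show False unfolding A_iff by blast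
  qed
qed

lemma Z:
  assumes z: "z \<in> N" and b: "bord z s" and F: "F \<subseteq> N"
  shows "z \<in> Phi (col z) s (Succ z) F"
proof -
  have bs: "\<And>y. y \<in> Succ z \<Longrightarrow> Var s \<in> y" and bz: "Var s \<notin> z" using b unfolding bord_def by auto
  have up: "y \<in> P s" if "y \<in> N" "z \<subseteq> y" "y \<noteq> z" for y
  proof -
    have "z \<subset> y" using that by blast
    then have "y \<in> Succ z" using Succ_iff that(1) by blast
    then show ?thesis using bs that(1) unfolding P_iff by blast
  qed
  have 1: "\<forall>i\<in>col z. z \<in> P i" using z unfolding P_iff col_def by blast
  have 2: "\<forall>r\<in>{..<n}-col z. z \<in> IMP (P r) (P s)"
  proof
    fix r assume r: "r \<in> {..<n} - col z"
    then have nr: "Var r \<notin> z" unfolding col_def by auto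
    show "z \<in> IMP (P r) (P s)" unfolding IMP_iff
    proof (intro conjI ballI impI)
      show "z \<in> N" by fact
      fix y assume y: "y \<in> N" "z \<subseteq> y" "y \<in> P r"
      then have "y \<noteq> z" using nr unfolding P_iff by blast
      then show "y \<in> P s" using up y by blast
    qed
  qed
  have 3: "\<forall>T\<in>Succ z. z \<in> IMP (A T) (P s)"
  proof
    fix T assume T: "T \<in> Succ z"
    have zT: "z \<subseteq> T" using T unfolding Succ_def by blast
    show "z \<in> IMP (A T) (P s)" unfolding IMP_iff
    proof (intro conjI ballI impI)
      show "z \<in> N" by fact
      fix y assume y: "y \<in> N" "z \<subseteq> y" "y \<in> A T"
      then have "y \<noteq> z" using zT unfolding A_iff by blast
      then show "y \<in> P s" using up y by blast
    qed
  qed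
  have 4: "\<forall>T\<in>F - Succ z. z \<in> IMP (P s) (A T)"
  proof
    fix T assume T: "T \<in> F - Succ z"
    show "z \<in> IMP (P s) (A T)" unfolding IMP_iff
    proof (intro conjI ballI impI)
      show "z \<in> N" by fact
      fix y assume y: "y \<in> N" "z \<subseteq> y" "y \<in> P s"
      have "y \<noteq> z" using y bz unfolding P_iff by blast
      then have zy: "z \<subset> y" using y by blast
      have "\<not> y \<subseteq> T"
      proof
        assume "y \<subseteq> T"
        then have "z \<subset> T" using zy by blast
        moreover have "T \<in> N" using T F by blast
        ultimately have "T \<in> Succ z" using Succ_iff by blast
        then show False using T by blast
      qed
      then show "y \<in> A T" using y unfolding A_iff by blast
    qed
  qed
  show ?thesis unfolding Phi_mem using z 1 2 3 4 by blast
qed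

end



context ctx begin

lemma A_G: "w \<in> N \<Longrightarrow> A w \<in> G"
proof (induction w rule: measure_induct_rule[where f="\<lambda>w. n - card (col w)"])
  case (less w)
  note wN = less.prems
  obtain q where q: "bord w q" using N_bord[OF wN] by blast
  have qn: "q < n" and qw: "Var q \<notin> w" and qS: "\<And>S. S \<in> Succ w \<Longrightarrow> Var q \<in> S"
    using q unfolding bord_def by auto
  define F where "F = Succ w"
  have Ffin: "finite F" using Succ_fin[OF wN] F_def by simp
  have FN: "F \<subseteq> N" using Succ_N[OF wN] F_def by simp
  have FA: "\<forall>T\<in>F. A T \<in> G"
  proof
    fix T assume T: "T \<in> F"
    have "card (col w) < card (col T)"
      by (rule psubset_card_mono[OF col_fin col_less[OF wN]]) (use T F_def in simp)
    then have "n - card (col T) < n - card (col w)" using col_card[of T] by linarith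
    then show "A T \<in> G" using less.IH T FN by blast
  qed
  define Tri where "Tri = {(C,s,S). C \<subseteq> {..<n} \<and> s < n \<and> S \<subseteq> F \<and> (\<forall>T\<in>S. Var s \<in> T)
      \<and> \<not> (\<exists>v\<in>F. col v = C \<and> Succ v = S)}"
  have Trifin: "finite Tri"
  proof (rule finite_subset)
    show "Tri \<subseteq> Pow {..<n} \<times> {..<n} \<times> Pow F" unfolding Tri_def by auto
    show "finite (Pow {..<n} \<times> {..<n} \<times> Pow F)" using Ffin by simp
  qed
  define K where "K = (\<lambda>(C,s,S). IMP (P q) (IMP (Phi C s S F) (P s)))"
  define Psi where "Psi = Phi (col w) q F F \<inter> (N \<inter> \<Inter>(K ` Tri))"
  have KG: "K t \<in> G" if "t \<in> Tri" for t
  proof -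
    obtain C s S where t: "t = (C,s,S)" by (cases t) auto
    then have C: "C \<subseteq> {..<n}" "s < n" "S \<subseteq> F" using that unfolding Tri_def by auto
    have "Phi C s S F \<in> G" by (rule Phi_G[OF C(1,2) Ffin C(3) FA])
    then show ?thesis unfolding t K_def using qn C(2)
      by (auto intro!: imp_meet_gen.gen_imp imp_meet_gen.gen_var)
  qed
  have PsiG: "Psi \<in> G" unfolding Psi_def
  proof (rule imp_meet_gen.gen_meet)
    show "Phi (col w) q F F \<in> G" by (rule Phi_G[OF col_sub qn Ffin _ FA]) simp
    have "K ` Tri \<subseteq> G" using KG by blast
    then show "N \<inter> \<Inter>(K ` Tri) \<in> G" using G_Inter[of "K ` Tri"] Trifin by blast
  qed
  have wPsi: "w \<in> Psi"
  proof -
    have "w \<in> Phi (col w) q F F" using Z[OF wN q FN] F_def by simp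
    moreover have "w \<in> K t" if t: "t \<in> Tri" for t
    proof -
      obtain C s S where tt: "t = (C,s,S)" by (cases t) auto
      have C: "C \<subseteq> {..<n}" "s < n" "S \<subseteq> F" "\<forall>T\<in>S. Var s \<in> T"
        and nr: "\<not> (\<exists>v\<in>F. col v = C \<and> Succ v = S)" using t tt unfolding Tri_def by auto
      show ?thesis unfolding tt K_def split IMP_iff
      proof (intro conjI ballI impI)
        show "w \<in> N" by fact
        fix y assume y: "y \<in> N" "w \<subseteq> y" "y \<in> P q"
        have "y \<noteq> w" using y qw unfolding P_iff by blast
        then have wy: "w \<subset> y" using y by blast
        show "y \<in> N" by fact
        fix v assume v: "v \<in> N" "y \<subseteq> v" "v \<in> Phi C s S F"
        show "v \<in> P s"
        proof (rule ccontr)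
          assume "v \<notin> P s"
          then have vs: "Var s \<notin> v" using v unfolding P_iff by blast
          have wv: "w \<subset> v" using wy v by blast
          then have vF: "v \<in> F" using Succ_iff[OF v(1)] F_def by blast
          have ST: "\<forall>T\<in>S. Var s \<in> T \<and> T \<in> N" using C FN by blast
          have l1: "col v = C \<and> bord v s \<and> S \<subseteq> Succ v" by (rule L1[OF v(3) vs C(1,2) ST])
          have sv: "Succ v \<subseteq> F"
          proof
            fix u assume u: "u \<in> Succ v"
            then have "u \<in> N" "v \<subset> u" using Succ_N[OF v(1)] unfolding Succ_def by auto
            then show "u \<in> F" using wv Succ_iff F_def by blast
          qed
          have "Succ v \<subseteq> S" using L2[OF v(3) _ sv] l1 by blast
          then have "Succ v = S" using l1 by blast
          then show False using nr vF l1 by blast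
        qed
      qed
    qed
    ultimately show ?thesis unfolding Psi_def using wN by blast
  qed
  have uniq: "y = w" if y: "y \<in> N" "y \<in> Psi" "Var q \<notin> y" for y
  proof -
    have yPhi: "y \<in> Phi (col w) q F F" using y unfolding Psi_def by blast
    have yK: "\<And>t. t \<in> Tri \<Longrightarrow> y \<in> K t" using y unfolding Psi_def by blast
    have ST: "\<forall>T\<in>F. Var q \<in> T \<and> T \<in> N" using qS FN F_def by blast
    have l1: "col y = col w \<and> bord y q \<and> F \<subseteq> Succ y" by (rule L1[OF yPhi y(3) col_sub qn ST])
    have "Succ y \<subseteq> F"
    proof (rule ccontr)
      assume "\<not> Succ y \<subseteq> F"
      then have ne: "Succ y - F \<noteq> {}" by blast
      have fin: "finite (Succ y - F)" using Succ_fin[OF y(1)] by blast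
      obtain z where z: "z \<in> Succ y - F" and zmax: "\<And>b. b \<in> Succ y - F \<Longrightarrow> z \<subseteq> b \<Longrightarrow> z = b"
        using finite_has_maximal[OF fin ne] by blast
      have zN: "z \<in> N" using z Succ_N[OF y(1)] by blast
      obtain s where s: "bord z s" using N_bord[OF zN] by blast
      have sn: "s < n" and sz: "Var s \<notin> z" and sS: "\<And>S. S \<in> Succ z \<Longrightarrow> Var s \<in> S"
        using s unfolding bord_def by auto
      have szF: "Succ z \<subseteq> F"
      proof
        fix u assume u: "u \<in> Succ z"
        have "y \<subset> z" using z unfolding Succ_def by blast
        then have "u \<in> Succ y" using u unfolding Succ_def by blast
        moreover have "z \<subseteq> u" "z \<noteq> u" using u unfolding Succ_def by auto
        ultimately show "u \<in> F" using zmax by blast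
      qed
      have tri: "(col z, s, Succ z) \<in> Tri"
        unfolding Tri_def
      proof (clarify, intro conjI)
        show "col z \<subseteq> {..<n}" "s < n" "Succ z \<subseteq> F" by (fact col_sub, fact sn, fact szF)
        show "\<forall>T\<in>Succ z. Var s \<in> T" using sS by blast
        show "\<not> (\<exists>v\<in>F. col v = col z \<and> Succ v = Succ z)"
        proof
          assume "\<exists>v\<in>F. col v = col z \<and> Succ v = Succ z"
          then obtain v where "v \<in> F" "col v = col z" "Succ v = Succ z" by blast
          then have "v = z" using det[of v z] FN zN by blast
          then show False using z \<open>v \<in> F\<close> by blast
        qed
      qed
      have "y \<in> K (col z, s, Succ z)" by (rule yK[OF tri])
      then have i: "\<forall>y'\<in>N. y \<subseteq> y' \<longrightarrow> y' \<in> P q \<longrightarrow> y' \<in> IMP (Phi (col z) s (Succ z) F) (P s)"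
        unfolding K_def split IMP_iff by blast
      have yz: "y \<subseteq> z" using z unfolding Succ_def by blast
      have "Var q \<in> z" using l1 z unfolding bord_def by blast
      then have "z \<in> P q" using zN unfolding P_iff by blast
      then have "z \<in> IMP (Phi (col z) s (Succ z) F) (P s)" using i zN yz by blast
      then have "\<forall>y'\<in>N. z \<subseteq> y' \<longrightarrow> y' \<in> Phi (col z) s (Succ z) F \<longrightarrow> y' \<in> P s" unfolding IMP_iff by blast
      moreover have "z \<in> Phi (col z) s (Succ z) F" by (rule Z[OF zN s FN])
      ultimately have "z \<in> P s" using zN by blast
      then show False using sz unfolding P_iff by blast
    qed
    then have "Succ y = Succ w" using l1 F_def by blast
    then show ?thesis using det[OF y(1) wN] l1 by blast
  qed
  have "A w = IMP Psi (P q)"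
  proof
    show "A w \<subseteq> IMP Psi (P q)"
    proof
      fix x assume x: "x \<in> A w"
      then have xN: "x \<in> N" and xw: "\<not> x \<subseteq> w" unfolding A_iff by auto
      show "x \<in> IMP Psi (P q)" unfolding IMP_iff
      proof (intro conjI ballI impI)
        show "x \<in> N" by fact
        fix y assume y: "y \<in> N" "x \<subseteq> y" "y \<in> Psi"
        show "y \<in> P q"
        proof (rule ccontr)
          assume "y \<notin> P q"
          then have "Var q \<notin> y" using y unfolding P_iff by blast
          then have "y = w" using uniq y by blast
          then show False using xw y by blast
        qed
      qed
    qed
    show "IMP Psi (P q) \<subseteq> A w"
    proof
      fix x assume x: "x \<in> IMP Psi (P q)"
      then have xN: "x \<in> N" and xi: "\<forall>y\<in>N. x \<subseteq> y \<longrightarrow> y \<in> Psi \<longrightarrow> y \<in> P q" unfolding IMP_iff by auto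
      have "\<not> x \<subseteq> w"
      proof
        assume "x \<subseteq> w"
        then have "w \<in> P q" using xi wN wPsi by blast
        then show False using qw unfolding P_iff by blast
      qed
      then show "x \<in> A w" using xN unfolding A_iff by blast
    qed
  qed
  moreover have "IMP Psi (P q) \<in> G" using PsiG qn by (auto intro: imp_meet_gen.gen_imp imp_meet_gen.gen_var)
  ultimately show ?case by simp
qed

end



context ctx begin

lemma up_iff: "U \<in> upsets N (\<subseteq>) \<longleftrightarrow> U \<subseteq> N \<and> (\<forall>x\<in>U. \<forall>y\<in>N. x \<subseteq> y \<longrightarrow> y \<in> U)"
  by (simp add: upsets_def)

lemma up_G: assumes U: "U \<in> upsets N (\<subseteq>)" shows "U \<in> G"
proof -
  have eq: "U = N \<inter> \<Inter>(A ` (N - U))"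
  proof
    show "U \<subseteq> N \<inter> \<Inter>(A ` (N - U))"
    proof
      fix x assume x: "x \<in> U"
      have xN: "x \<in> N" using x U unfolding up_iff by blast
      have "x \<in> A w" if w: "w \<in> N - U" for w
      proof -
        have "\<not> x \<subseteq> w" using x w U unfolding up_iff by blast
        then show ?thesis using xN unfolding A_iff by blast
      qed
      then show "x \<in> N \<inter> \<Inter>(A ` (N - U))" using xN by blast
    qed
    show "N \<inter> \<Inter>(A ` (N - U)) \<subseteq> U"
    proof
      fix x assume x: "x \<in> N \<inter> \<Inter>(A ` (N - U))"
      show "x \<in> U"
      proof (rule ccontr)
        assume "x \<notin> U"
        then have "x \<in> A x" using x by blast
        then show False unfolding A_iff by blast
      qed
    qed
  qed
  have "A ` (N - U) \<subseteq> G" using A_G by blast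
  moreover have "finite (A ` (N - U))" using N_fin by simp
  ultimately show ?thesis using G_Inter eq by metis
qed

lemma val_up: "val N univ_col i \<in> upsets N (\<subseteq>)"
  by (auto simp: upsets_def val_def univ_col_def)

lemma himp_up: "himp N (\<subseteq>) U V \<in> upsets N (\<subseteq>)"
  unfolding upsets_def himp_def by auto

lemma inter_up: "U \<in> upsets N (\<subseteq>) \<Longrightarrow> V \<in> upsets N (\<subseteq>) \<Longrightarrow> U \<inter> V \<in> upsets N (\<subseteq>)"
  unfolding upsets_def by auto

lemma G_up: "X \<in> G \<Longrightarrow> X \<in> upsets N (\<subseteq>)"
  by (induction rule: imp_meet_gen.induct) (auto intro: val_up himp_up inter_up)

definition g :: "form set set \<Rightarrow> 'a set" where
  "g U = {x\<in>M. \<forall>y\<in>Ms. le x y \<longrightarrow> f y \<in> U}"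

lemma g_inter: "g (U \<inter> V) = g U \<inter> g V"
  by (auto simp: g_def)

lemma himp_iff: "x \<in> himp X R U V \<longleftrightarrow> x \<in> X \<and> (\<forall>y\<in>X. R x y \<longrightarrow> y \<in> U \<longrightarrow> y \<in> V)"
  by (simp add: himp_def)

lemma g_iff: "x \<in> g U \<longleftrightarrow> x \<in> M \<and> (\<forall>y\<in>Ms. le x y \<longrightarrow> f y \<in> U)"
  by (simp add: g_def)

lemma g_imp: assumes U: "U \<in> upsets N (\<subseteq>)" and V: "V \<in> upsets N (\<subseteq>)"
  shows "g (himp N (\<subseteq>) U V) = himp M le (g U) (g V)"
proof
  show "g (himp N (\<subseteq>) U V) \<subseteq> himp M le (g U) (g V)"
  proof
    fix x assume x: "x \<in> g (himp N (\<subseteq>) U V)"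
    have xM: "x \<in> M" using x unfolding g_iff by blast
    have xi: "\<And>y. y \<in> Ms \<Longrightarrow> le x y \<Longrightarrow> f y \<in> himp N (\<subseteq>) U V"
      using x unfolding g_iff by blast
    have "y \<in> g V" if y: "y \<in> M" "le x y" "y \<in> g U" for y
    proof -
      have yU: "\<And>z. z \<in> Ms \<Longrightarrow> le y z \<Longrightarrow> f z \<in> U" using y(3) unfolding g_iff by blast
      have "f z \<in> V" if z: "z \<in> Ms" "le y z" for z
      proof -
        have zM: "z \<in> M" using z Ms_M by blast
        have "le x z" using M_trans[OF xM y(1) zM y(2) z(2)] .
        then have h: "f z \<in> himp N (\<subseteq>) U V" using xi z(1) by blast
        have fU: "f z \<in> U" using yU z by blast
        have fN: "f z \<in> N" using z by blast
        have "\<forall>t\<in>N. f z \<subseteq> t \<longrightarrow> t \<in> U \<longrightarrow> t \<in> V" using h unfolding himp_iff by blast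
        then show "f z \<in> V" using fU fN by blast
      qed
      then show ?thesis using y(1) unfolding g_iff by blast
    qed
    then show "x \<in> himp M le (g U) (g V)" using xM unfolding himp_iff by blast
  qed
  show "himp M le (g U) (g V) \<subseteq> g (himp N (\<subseteq>) U V)"
  proof
    fix x assume x: "x \<in> himp M le (g U) (g V)"
    have xM: "x \<in> M" using x unfolding himp_iff by blast
    have xi: "\<And>y. y \<in> M \<Longrightarrow> le x y \<Longrightarrow> y \<in> g U \<Longrightarrow> y \<in> g V"
      using x unfolding himp_iff by blast
    have "f y \<in> himp N (\<subseteq>) U V" if y: "y \<in> Ms" "le x y" for y
    proof -
      have "f y \<in> N" using y by blast
      moreover have "T \<in> V" if T: "T \<in> N" "f y \<subseteq> T" "T \<in> U" for T
      proof -
        obtain y' where y': "y' \<in> Ms" "le y y'" "f y' = T" using f_back[OF y(1) N_univ[OF T(1)] T(2)] by blast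
        have y'M: "y' \<in> M" "y \<in> M" using y y' Ms_M by auto
        have xy': "le x y'" using M_trans[OF xM y'M(2) y'M(1) y(2) y'(2)] .
        have "f z \<in> U" if z: "z \<in> Ms" "le y' z" for z
        proof -
          have "f y' \<subseteq> f z" using f_mono[OF y'(1) z(1) z(2)] .
          moreover have "f z \<in> N" using z by blast
          ultimately show ?thesis using U T(3) y'(3) unfolding up_iff by blast
        qed
        then have "y' \<in> g U" using y'M(1) unfolding g_iff by blast
        then have "y' \<in> g V" using xi y'M(1) xy' by blast
        then have "f y' \<in> V" using y'(1) M_refl[OF y'M(1)] unfolding g_iff by blast
        then show "T \<in> V" using y'(3) by simp
      qed
      ultimately show ?thesis unfolding himp_iff by blast
    qed
    then show "x \<in> g (himp N (\<subseteq>) U V)" using xM unfolding g_iff by blast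
  qed
qed

lemma g_val: assumes i: "i < n" shows "g (val N univ_col i) = val M c i"
proof
  show "g (val N univ_col i) \<subseteq> val M c i"
  proof
    fix x assume x: "x \<in> g (val N univ_col i)"
    then have xM: "x \<in> M" and xi: "\<And>y. y \<in> Ms \<Longrightarrow> le x y \<Longrightarrow> c y i"
      unfolding g_def val_def univ_col_def using f_col i by auto
    have "c x i"
    proof (rule ccontr)
      assume "\<not> c x i"
      then obtain y where y: "y \<in> M" "le x y" "border_point M le c i y" using hb xM i unfolding has_borders_def by blast
      then have "y \<in> Ms" using i unfolding separated_pts_def by blast
      then have "c y i" using xi y by blast
      then show False using y unfolding border_point_def by blast
    qed
    then show "x \<in> val M c i" using xM unfolding val_def by blast
  qed
  show "val M c i \<subseteq> g (val N univ_col i)"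
  proof
    fix x assume x: "x \<in> val M c i"
    then have xM: "x \<in> M" and cx: "c x i" unfolding val_def by auto
    show "x \<in> g (val N univ_col i)" unfolding g_def
    proof (intro CollectI conjI ballI impI)
      show "x \<in> M" by fact
      fix y assume y: "y \<in> Ms" "le x y"
      have "c y i" using c_mono[OF xM _ y(2) i cx] y Ms_M by blast
      then show "f y \<in> val N univ_col i" using y f_col i unfolding val_def univ_col_def by blast
    qed
  qed
qed

lemma g_inj: "inj_on g (upsets N (\<subseteq>))"
proof (rule inj_onI)
  fix U V assume U: "U \<in> upsets N (\<subseteq>)" and V: "V \<in> upsets N (\<subseteq>)" and e: "g U = g V"
  have sub: "U \<subseteq> V" if U: "U \<in> upsets N (\<subseteq>)" and e: "g U = g V" for U V
  proof
    fix T assume T: "T \<in> U"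
    then obtain x where x: "x \<in> Ms" "T = f x" using U unfolding up_iff by blast
    have "x \<in> g U" unfolding g_def
    proof (intro CollectI conjI ballI impI)
      show "x \<in> M" using x Ms_M by blast
      fix y assume y: "y \<in> Ms" "le x y"
      then show "f y \<in> U" using f_mono[OF x(1) y] U T x unfolding up_iff by blast
    qed
    then have "x \<in> g V" using e by simp
    then show "T \<in> V" using x M_refl Ms_M unfolding g_def by blast
  qed
  show "U = V" using sub[OF U e] sub[OF V e[symmetric]] by blast
qed

lemma B_sub: "X \<in> imp_meet_gen n M le c \<Longrightarrow> \<exists>U\<in>upsets N (\<subseteq>). X = g U"
proof (induction rule: imp_meet_gen.induct)
  case (gen_var i)
  then show ?case using g_val val_up by metis
next
  case (gen_meet X Y)
  then obtain U V where "U \<in> upsets N (\<subseteq>)" "X = g U" "V \<in> upsets N (\<subseteq>)" "Y = g V" by blast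
  then show ?case using g_inter inter_up by metis
next
  case (gen_imp X Y)
  then obtain U V where "U \<in> upsets N (\<subseteq>)" "X = g U" "V \<in> upsets N (\<subseteq>)" "Y = g V" by blast
  then show ?case using g_imp himp_up by metis
qed

lemma img_sub: "U \<in> G \<Longrightarrow> g U \<in> imp_meet_gen n M le c"
proof (induction rule: imp_meet_gen.induct)
  case (gen_var i)
  then show ?case using g_val imp_meet_gen.gen_var by metis
next
  case (gen_meet X Y)
  then show ?case using g_inter imp_meet_gen.gen_meet by metis
next
  case (gen_imp X Y)
  then show ?case using g_imp G_up imp_meet_gen.gen_imp by metis
qed

lemma main: "imp_meet_gen n M le c = g ` upsets N (\<subseteq>)"
proof
  show "imp_meet_gen n M le c \<subseteq> g ` upsets N (\<subseteq>)" using B_sub by blast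
  show "g ` upsets N (\<subseteq>) \<subseteq> imp_meet_gen n M le c" using img_sub up_G by blast
qed

end

theorem theorem3p16:
  fixes n :: nat and M :: "'a set" and le :: "'a \<Rightarrow> 'a \<Rightarrow> bool" and c :: "'a \<Rightarrow> nat \<Rightarrow> bool"
    and f :: "'a \<Rightarrow> form set"
  assumes "n \<ge> 1"
    and "is_model n M le c"
    and "has_borders n M le c"
    and "p_morphism n (separated_pts n M le c) le c (univ_pts n) (\<subseteq>) univ_col f"
  defines "Ms \<equiv> separated_pts n M le c"
  defines "N \<equiv> f ` Ms"
  defines "h \<equiv> (\<lambda>U. {x\<in>Ms. f x \<in> U})"
  defines "r \<equiv> (\<lambda>V. {x\<in>M. \<forall>y\<in>M. le x y \<longrightarrow> y \<in> Ms \<longrightarrow> y \<in> V})"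
  shows "imp_meet_gen n M le c = (r \<circ> h) ` upsets N (\<subseteq>)
    \<and> (\<exists>g. bij_betw g (upsets N (\<subseteq>)) (imp_meet_gen n M le c)
          \<and> (\<forall>U\<in>upsets N (\<subseteq>). \<forall>V\<in>upsets N (\<subseteq>).
                g (U \<inter> V) = g U \<inter> g V
              \<and> g (himp N (\<subseteq>) U V) = himp M le (g U) (g V)))"
proof -
  interpret ctx n M le c f using assms(1-4) by unfold_locales
  have rh: "r \<circ> h = g"
  proof
    fix U
    show "(r \<circ> h) U = g U" unfolding r_def h_def g_def Ms_def using Ms_M by auto
  qed
  show ?thesis unfolding rh N_def Ms_def
  proof (intro conjI exI)
    show "imp_meet_gen n M le c = g ` upsets (f ` separated_pts n M le c) (\<subseteq>)" by (rule main)
    show "bij_betw g (upsets (f ` separated_pts n M le c) (\<subseteq>)) (imp_meet_gen n M le c)"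
      unfolding bij_betw_def using g_inj main by simp
    show "\<forall>U\<in>upsets (f ` separated_pts n M le c) (\<subseteq>). \<forall>V\<in>upsets (f ` separated_pts n M le c) (\<subseteq>).
       g (U \<inter> V) = g U \<inter> g V \<and> g (himp (f ` separated_pts n M le c) (\<subseteq>) U V) = himp M le (g U) (g V)"
      using g_inter g_imp by blast
  qed
qed


end
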